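(* Let $A\in\mathrm{SL}(n,\mathbb{C})$ be such that its characteristic polynomial $\chi_A(x)=x^n-c_{n-1}x^{n-1}+c_{n-2}x^{n-2}-\cdots+(-1)^n$ is $c$-reciprocal. Let $R(\chi_A,\chi_A')$ denote the resultant of $\chi_A$ and its derivative $\chi_A'$. Then: (i) $A$ is regular $2m$-loxodromic for some integer $m\ge 0$ if and only if $R(\chi_A,\chi_A')>0$; (ii) $A$ is regular $(2m+1)$-loxodromic for some integer $m\ge 0$ if and only if $R(\chi_A,\chi_A')<0$; (iii) $A$ is not regular (i.e. has a repeated eigenvalue) if and only if $R(\chi_A,\chi_A')=0$.
   Context: A polynomial $f$ with nonzero roots is $c$-reciprocal if for every root $\lambda$, $\overline{\lambda}^{-1}$ is also a root with the same multiplicity. A matrix in $\mathrm{SL}(n,\mathbb{C})$ is regular if its characteristic polynomial has no repeated roots. A matrix $g\in\mathrm{SL}(n,\mathbb{C})$ is $k$-loxodromic ($k\ge 0$) if it has $k$ pairs of eigenvalues $r_je^{i\theta_j}, r_j^{-1}e^{i\theta_j}$ with $r_j>0$, $r_j\neq 1$, $j=1,\dots,k$, and all other eigenvalues have modulus one ($0$-loxodromic means all eigenvalues have modulus one). "Regular $k$-loxodromic" means regular and $k$-loxodromic. *)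

theory Defs
  imports "Jordan_Normal_Form.Char_Poly" "Subresultants.Resultant_Prelim"
begin

definition c_reciprocal :: "complex poly \<Rightarrow> bool" where
  "c_reciprocal f \<longleftrightarrow> f \<noteq> 0 \<and>
     (\<forall>z. poly f z = 0 \<longrightarrow> z \<noteq> 0 \<and> order (inverse (cnj z)) f = order z f)"

definition SL :: "nat \<Rightarrow> complex mat set" where
  "SL n = {A. A \<in> carrier_mat n n \<and> det A = 1}"

definition regular_mat :: "complex mat \<Rightarrow> bool" where
  "regular_mat A \<longleftrightarrow> rsquarefree (char_poly A)"

definition k_loxodromic :: "nat \<Rightarrow> complex mat \<Rightarrow> bool" where
  "k_loxodromic k A \<longleftrightarrow>
     (\<exists>(r :: nat \<Rightarrow> real) (\<theta> :: nat \<Rightarrow> real) (N :: complex multiset).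
        (\<forall>j<k. r j > 0 \<and> r j \<noteq> 1) \<and> (\<forall>z\<in>#N. cmod z = 1) \<and>
        proots (char_poly A) =
          (\<Sum>j<k. {# complex_of_real (r j) * cis (\<theta> j),
                     complex_of_real (inverse (r j)) * cis (\<theta> j) #}) + N)"

end

theory Submission
  imports Defs "Subresultants.Subresultant"
begin


definition Qr :: "complex poly \<Rightarrow> complex poly \<Rightarrow> complex" where
  "Qr f g = lead_coeff f ^ degree g * (\<Prod>a\<in>#proots f. poly g a)"

lemma poly_lin_prod: "poly (\<Prod>x\<in>#P. [:-x, 1:]) (a::complex) = (\<Prod>x\<in>#P. a - x)"
  by (induction P) (auto simp: algebra_simps)

lemma poly_lc_prod: "poly (g::complex poly) a = lead_coeff g * (\<Prod>b\<in>#proots g. a - b)"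
proof -
  have "poly g a = poly (Polynomial.smult (lead_coeff g) (\<Prod>x\<in>#proots g. [:-x, 1:])) a"
    by (simp only: complex_poly_decompose_multiset)
  also have "\<dots> = lead_coeff g * (\<Prod>b\<in>#proots g. a - b)"
    by (simp only: poly_smult poly_lin_prod)
  finally show ?thesis .
qed

lemma prod_mset_const_pow: "(\<Prod>a\<in>#P. (c::'a::comm_monoid_mult)) = c ^ size P"
  by (induction P) auto

lemma prod_mset_mult_distrib: "(\<Prod>a\<in>#P. (f a * g a::'a::comm_monoid_mult)) = (\<Prod>a\<in>#P. f a) * (\<Prod>a\<in>#P. g a)"
  by (induction P) (auto simp: ac_simps)

lemma prod_mset_swap: "(\<Prod>a\<in>#P. \<Prod>b\<in>#Q. (h a b::'a::comm_monoid_mult)) = (\<Prod>b\<in>#Q. \<Prod>a\<in>#P. h a b)"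
proof (induction P)
  case empty then show ?case by (simp add: prod_mset_const_pow)
next
  case (add x P) then show ?case by (simp add: prod_mset_mult_distrib)
qed

lemma Qr_alt: "Qr f g = lead_coeff f ^ degree g * lead_coeff g ^ degree f *
   (\<Prod>a\<in>#proots f. \<Prod>b\<in>#proots g. a - b)"
proof -
  have "(\<Prod>a\<in>#proots f. poly g a) = (\<Prod>a\<in>#proots f. lead_coeff g * (\<Prod>b\<in>#proots g. a - b))"
    by (rule arg_cong[where f=prod_mset], rule image_mset_cong, rule poly_lc_prod)
  then show ?thesis unfolding Qr_def
    by (simp add: prod_mset_mult_distrib prod_mset_const_pow size_proots_complex)
qed

lemma Qr_swap: "Qr f g = (-1)^(degree f * degree g) * Qr g f"
proof -
  have "(\<Prod>a\<in>#proots f. \<Prod>b\<in>#proots g. a - b) = (\<Prod>b\<in>#proots g. \<Prod>a\<in>#proots f. a - b)"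
    by (rule prod_mset_swap)
  also have "\<dots> = (\<Prod>b\<in>#proots g. \<Prod>a\<in>#proots f. (-1) * (b - a))" by simp
  also have "\<dots> = (\<Prod>b\<in>#proots g. (-1) ^ degree f * (\<Prod>a\<in>#proots f. (b - a)))"
    by (simp only: prod_mset_mult_distrib prod_mset_const_pow size_proots_complex)
  also have "\<dots> = (-1) ^ (degree f * degree g) * (\<Prod>b\<in>#proots g. \<Prod>a\<in>#proots f. (b - a))"
    by (simp only: prod_mset_mult_distrib prod_mset_const_pow size_proots_complex power_mult)
  finally show ?thesis unfolding Qr_alt by (simp add: ac_simps)
qed

lemma Qr_const_right: "Qr f [:c:] = c ^ degree f"
proof -
  have "poly [:c:] = (\<lambda>_. c)" by auto
  then show ?thesis unfolding Qr_def by (simp add: prod_mset_const_pow size_proots_complex)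
qed

lemma Qr_const_left: "Qr [:c:] g = c ^ degree g"
  unfolding Qr_def by simp

lemma Qr_mod: assumes "g \<noteq> 0"
  shows "(\<Prod>b\<in>#proots g. poly f b) = (\<Prod>b\<in>#proots g. poly (f mod g) b)"
proof (rule arg_cong[where f=prod_mset], rule image_mset_cong)
  fix b assume "b \<in># proots g"
  hence "poly g b = 0" using assms by simp
  moreover have "f = (f div g) * g + f mod g" by simp
  hence "poly f b = poly (f div g) b * poly g b + poly (f mod g) b" by (metis poly_add poly_mult)
  ultimately show "poly f b = poly (f mod g) b" by simp
qed

lemma resultant_Qr_ge:
  fixes f g :: "complex poly"
  assumes IH: "\<And>p q. degree p + degree q < degree f + degree g \<Longrightarrow> resultant p q = Qr p q"
    and le: "degree g \<le> degree f" and g0: "degree g > 0"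
  shows "resultant f g = Qr f g"
proof -
  define H where "H = f mod g"
  have gnz: "g \<noteq> 0" using g0 by auto
  have FGH: "f + (- (f div g)) * g = H" unfolding H_def
    by (metis add_diff_cancel_left' diff_conv_add_uminus div_mult_mod_eq minus_mult_left add.commute)
  have dh: "degree H < degree g" unfolding H_def using degree_mod_less[OF gnz, of f] g0 by auto
  have ch: "degree H < degree g \<or> H = 0 \<and> f \<noteq> 0 \<and> g \<noteq> 0" using dh by auto
  have QrH: "Qr f g = (-1)^(degree f * degree g) * lead_coeff g ^ degree f * (\<Prod>b\<in>#proots g. poly H b)"
    unfolding Qr_swap[of f g] unfolding Qr_def H_def Qr_mod[OF gnz, of f] by simp
  show ?thesis
  proof (cases "degree H = 0")
    case True
    then obtain c where Hc: "H = [:c:]" by (metis degree0_coeffs)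
    from BT_lemma_1_13[OF FGH le ch] dh
    have "subresultant (degree H) f g = Polynomial.smult ((- 1) ^ ((degree f - degree H) * (degree g - degree H)) *
       lead_coeff g ^ (degree f - degree H) * lead_coeff H ^ (degree g - degree H - 1)) H" by auto
    hence "resultant f g = (- 1) ^ (degree f * degree g) * lead_coeff g ^ degree f * c ^ (degree g - 1) * c"
      unfolding coeff_subresultant_0_0_resultant[symmetric] using True Hc by simp
    also have "\<dots> = (- 1) ^ (degree f * degree g) * lead_coeff g ^ degree f * c ^ degree g"
      using g0 by (simp add: power_eq_if)
    moreover have "poly [:c:] = (\<lambda>_. c)" by auto
    ultimately show ?thesis unfolding QrH Hc by (simp add: prod_mset_const_pow size_proots_complex)
  next
    case False
    from BT_lemma_1_12[OF FGH le ch, of 0] False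
    have "subresultant 0 f g = Polynomial.smult ((- 1) ^ (degree f * degree g) *
       lead_coeff g ^ (degree f - degree H)) (subresultant 0 g H)" by auto
    hence "resultant f g = (- 1) ^ (degree f * degree g) * lead_coeff g ^ (degree f - degree H) * resultant g H"
      unfolding coeff_subresultant_0_0_resultant[symmetric] by simp
    also have "resultant g H = Qr g H" using IH dh le by simp
    also have "Qr g H = lead_coeff g ^ degree H * (\<Prod>b\<in>#proots g. poly H b)" unfolding Qr_def ..
    finally have "resultant f g = (- 1) ^ (degree f * degree g) * (lead_coeff g ^ (degree f - degree H) * lead_coeff g ^ degree H) * (\<Prod>b\<in>#proots g. poly H b)"
      by (simp add: ac_simps)
    also have "lead_coeff g ^ (degree f - degree H) * lead_coeff g ^ degree H = lead_coeff g ^ degree f"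
      using dh le by (simp add: power_add[symmetric])
    finally show ?thesis unfolding QrH by simp
  qed
qed

lemma resultant_Qr: "resultant f (g :: complex poly) = Qr f g"
proof (induction "degree f + degree g" arbitrary: f g rule: less_induct)
  case less
  have IH: "\<And>p q. degree p + degree q < degree f + degree g \<Longrightarrow> resultant p q = Qr p q"
    using less by blast
  show ?case
  proof (cases "degree g = 0")
    case True
    then obtain c where "g = [:c:]" by (metis degree0_coeffs)
    then show ?thesis by (simp add: Qr_const_right)
  next
    case g0: False
    show ?thesis
    proof (cases "degree f = 0")
      case True
      then obtain c where "f = [:c:]" by (metis degree0_coeffs)
      then show ?thesis by (simp add: Qr_const_left)
    next
      case f0: False
      show ?thesis
      proof (cases "degree g \<le> degree f")
        case True
        then show ?thesis using resultant_Qr_ge[OF IH True] g0 by simp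
      next
        case False
        have IH': "\<And>p q. degree p + degree q < degree g + degree f \<Longrightarrow> resultant p q = Qr p q"
          using IH by simp
        have "resultant g f = Qr g f" using resultant_Qr_ge[OF IH'] False f0 by simp
        then show ?thesis using resultant_swap[of f g] Qr_swap[of f g] by (simp add: mult.commute)
      qed
    qed
  qed
qed



lemma inv_prod:
  fixes t :: "'a \<Rightarrow> complex"
  assumes "finite D" "\<forall>p\<in>D. \<tau> p \<in> D \<and> \<tau> (\<tau> p) = p \<and> t (\<tau> p) = cnj (t p) \<and> t p \<noteq> 0"
  shows "\<exists>c>0. prod t D = prod t {p\<in>D. \<tau> p = p} * complex_of_real c"
  using assms
proof (induction "card D" arbitrary: D rule: less_induct)
  case less
  show ?case
  proof (cases "D = {}")
    case True then show ?thesis by (intro exI[of _ 1]) auto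
  next
    case False
    then obtain p where p: "p \<in> D" by auto
    show ?thesis
    proof (cases "\<tau> p = p")
      case True
      define D' where "D' = D - {p}"
      have cD': "card D' < card D" unfolding D'_def using card_Diff1_less[OF less(2) p] by simp
      have "\<forall>q\<in>D'. \<tau> q \<in> D' \<and> \<tau> (\<tau> q) = q \<and> t (\<tau> q) = cnj (t q) \<and> t q \<noteq> 0"
      proof
        fix q assume q: "q \<in> D'"
        then have q1: "q \<in> D" "q \<noteq> p" unfolding D'_def by auto
        have "\<tau> q \<noteq> p"
        proof
          assume "\<tau> q = p"
          then have "\<tau> (\<tau> q) = \<tau> p" by simp
          then show False using q1 less(3) True by auto
        qed
        then show "\<tau> q \<in> D' \<and> \<tau> (\<tau> q) = q \<and> t (\<tau> q) = cnj (t q) \<and> t q \<noteq> 0"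
          using q1 less(3) unfolding D'_def by auto
      qed
      from less(1)[OF cD' _ this] obtain c where c: "c > 0" "prod t D' = prod t {q\<in>D'. \<tau> q = q} * complex_of_real c"
        using less(2) D'_def by auto
      have e1: "D = insert p D'" "p \<notin> D'" using p D'_def by auto
      have e2: "{q\<in>D. \<tau> q = q} = insert p {q\<in>D'. \<tau> q = q}" using e1 True by auto
      have fin: "finite D'" using less(2) D'_def by auto
      show ?thesis using c e1 e2 fin by (intro exI[of _ c]) (simp add: prod.insert)
    next
      case False
      define D' where "D' = D - {p, \<tau> p}"
      have tp: "\<tau> p \<in> D" using less(3) p by auto
      have cD': "card D' < card D" unfolding D'_def using p less(2) tp
        by (intro psubset_card_mono) auto
      have "\<forall>q\<in>D'. \<tau> q \<in> D' \<and> \<tau> (\<tau> q) = q \<and> t (\<tau> q) = cnj (t q) \<and> t q \<noteq> 0"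
      proof
        fix q assume q: "q \<in> D'"
        then have q1: "q \<in> D" "q \<noteq> p" "q \<noteq> \<tau> p" unfolding D'_def by auto
        have tq: "\<tau> (\<tau> q) = q" using q1 less(3) by auto
        have "\<tau> q \<noteq> p"
        proof
          assume "\<tau> q = p"
          then have "\<tau> (\<tau> q) = \<tau> p" by simp
          then show False using q1 tq by auto
        qed
        moreover have "\<tau> q \<noteq> \<tau> p"
        proof
          assume "\<tau> q = \<tau> p"
          then have "\<tau> (\<tau> q) = \<tau> (\<tau> p)" by simp
          then show False using q1 tq less(3) p by auto
        qed
        ultimately show "\<tau> q \<in> D' \<and> \<tau> (\<tau> q) = q \<and> t (\<tau> q) = cnj (t q) \<and> t q \<noteq> 0"
          using q1 less(3) unfolding D'_def by auto
      qed
      from less(1)[OF cD' _ this] obtain c where c: "c > 0" "prod t D' = prod t {q\<in>D'. \<tau> q = q} * complex_of_real c"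
        using less(2) D'_def by auto
      have fin: "finite D'" using less(2) D'_def by auto
      have e1: "D = insert p (insert (\<tau> p) D')" "p \<notin> insert (\<tau> p) D'" "\<tau> p \<notin> D'"
        using p tp False D'_def by auto
      have e2: "{q\<in>D. \<tau> q = q} = {q\<in>D'. \<tau> q = q}" using e1 False less(3) p by auto
      have "prod t D = t p * t (\<tau> p) * prod t D'" using e1 fin by (simp add: prod.insert)
      also have "t p * t (\<tau> p) = complex_of_real (cmod (t p) ^ 2)"
        using less(3) p complex_norm_square[of "t p"] by simp
      finally have "prod t D = prod t {q\<in>D. \<tau> q = q} * complex_of_real (cmod (t p) ^ 2 * c)"
        using c e2 by (simp add: ac_simps)
      moreover have "cmod (t p) ^ 2 * c > 0" using c less(3) p by simp
      ultimately show ?thesis by blast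
    qed
  qed
qed

lemma real_prod_sign:
  fixes g :: "'a \<Rightarrow> real"
  assumes "finite U" "\<forall>x\<in>U. g x \<noteq> 0"
  shows "prod g U \<noteq> 0 \<and> (prod g U > 0 \<longleftrightarrow> even (card {x\<in>U. g x < 0}))"
  using assms
proof (induction U rule: finite_induct)
  case empty then show ?case by simp
next
  case (insert x F)
  have IH: "prod g F \<noteq> 0" "prod g F > 0 \<longleftrightarrow> even (card {x\<in>F. g x < 0})" using insert by auto
  have fF: "finite {y\<in>F. g y < 0}" using insert by auto
  show ?case
  proof (cases "g x < 0")
    case True
    have "{y\<in>insert x F. g y < 0} = insert x {y\<in>F. g y < 0}" using True by auto
    then have "card {y\<in>insert x F. g y < 0} = Suc (card {y\<in>F. g y < 0})" using fF insert(2) by simp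
    moreover from IH(1) have "prod g F < 0 \<or> prod g F > 0" by linarith
    ultimately show ?thesis using IH True insert
      by (auto simp: zero_less_mult_iff mult_less_0_iff)
  next
    case False
    then have gx: "g x > 0" using insert(4) by force
    have "{y\<in>insert x F. g y < 0} = {y\<in>F. g y < 0}" using False by auto
    then show ?thesis using IH gx insert by (auto simp: zero_less_mult_iff)
  qed
qed

lemma sigma_props:
  fixes a :: complex
  shows "inverse (cnj (inverse (cnj a))) = a"
    and "cmod (inverse (cnj a)) = inverse (cmod a)"
  by (simp_all add: norm_inverse)

lemma sigma_fix: "(a::complex) \<noteq> 0 \<Longrightarrow> inverse (cnj a) = a \<longleftrightarrow> cmod a = 1"
proof -
  assume a: "a \<noteq> 0"
  have "inverse (cnj a) = a \<longleftrightarrow> a * cnj a = 1" using a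
    by (metis complex_cnj_zero_iff inverse_unique left_inverse mult.commute)
  also have "\<dots> \<longleftrightarrow> complex_of_real (cmod a ^ 2) = 1" by (simp only: complex_norm_square)
  also have "\<dots> \<longleftrightarrow> cmod a ^ 2 = 1" by (metis of_real_1 of_real_eq_iff)
  also have "\<dots> \<longleftrightarrow> cmod a = 1" by (simp add: abs_square_eq_1)
  finally show ?thesis .
qed

lemma card_split:
  fixes S :: "complex set"
  assumes fin: "finite S" and nz: "0 \<notin> S" and cl: "\<forall>x\<in>S. inverse (cnj x) \<in> S"
  shows "card {x\<in>S. cmod x \<noteq> 1} = 2 * card {x\<in>S. cmod x < 1}"
proof -
  define \<sigma> where "\<sigma> = (\<lambda>x::complex. inverse (cnj x))"
  define L where "L = {x\<in>S. cmod x < 1}"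
  define G where "G = {x\<in>S. cmod x > 1}"
  have inj: "inj_on \<sigma> L"
  proof (rule inj_onI)
    fix x y assume "\<sigma> x = \<sigma> y"
    then have "\<sigma> (\<sigma> x) = \<sigma> (\<sigma> y)" by simp
    then show "x = y" unfolding \<sigma>_def by (simp only: sigma_props(1))
  qed
  have img: "\<sigma> ` L = G"
  proof
    show "\<sigma> ` L \<subseteq> G"
    proof
      fix y assume "y \<in> \<sigma> ` L"
      then obtain x where x: "y = \<sigma> x" "x \<in> S" "cmod x < 1" unfolding L_def by auto
      have "x \<noteq> 0" using x nz by auto
      then have "cmod x > 0" by simp
      then have "inverse (cmod x) > 1" using x(3) by (rule one_less_inverse)
      then show "y \<in> G" unfolding G_def using x cl by (simp add: \<sigma>_def sigma_props(2))
    qed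
    show "G \<subseteq> \<sigma> ` L"
    proof
      fix y assume y: "y \<in> G"
      then have y1: "cmod y > 1" "y \<in> S" unfolding G_def by auto
      then have "inverse (cmod y) < 1" by (simp add: inverse_less_1_iff)
      then have "\<sigma> y \<in> L" unfolding L_def using cl y1 by (simp add: \<sigma>_def sigma_props(2))
      moreover have "\<sigma> (\<sigma> y) = y" unfolding \<sigma>_def by (rule sigma_props(1))
      ultimately show "y \<in> \<sigma> ` L" by (metis image_eqI)
    qed
  qed
  have cG: "card G = card L" using card_image[OF inj] img by simp
  have "{x\<in>S. cmod x \<noteq> 1} = L \<union> G" unfolding L_def G_def by auto
  moreover have "L \<inter> G = {}" unfolding L_def G_def by auto
  moreover have "finite L" "finite G" using fin unfolding L_def G_def by auto
  ultimately have "card {x\<in>S. cmod x \<noteq> 1} = card L + card G" by (simp add: card_Un_disjoint)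
  then show ?thesis using cG L_def by simp
qed

lemma sign_main:
  fixes S :: "complex set"
  assumes fin: "finite S" and nz: "0 \<notin> S" and cl: "\<forall>x\<in>S. inverse (cnj x) \<in> S"
    and pr: "(\<Prod>x\<in>S. x) = 1"
  shows "\<exists>\<rho>::real. (\<Prod>a\<in>S. \<Prod>b\<in>S-{a}. a - b) = complex_of_real \<rho> \<and> \<rho> \<noteq> 0
           \<and> (\<rho> > 0 \<longleftrightarrow> even (card {x\<in>S. cmod x < 1}))"
proof -
  define \<sigma> where "\<sigma> = (\<lambda>x::complex. inverse (cnj x))"
  have \<sigma>\<sigma>: "\<sigma> (\<sigma> x) = x" for x by (simp add: \<sigma>_def)
  have \<sigma>inj: "\<sigma> x = \<sigma> y \<Longrightarrow> x = y" for x y by (metis \<sigma>\<sigma>)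
  define D where "D = Sigma S (\<lambda>a. S - {a})"
  have finD: "finite D" using fin by (simp add: D_def)
  have e1: "(\<Prod>a\<in>S. \<Prod>b\<in>S-{a}. a - b) = (\<Prod>p\<in>D. fst p - snd p)"
    unfolding D_def using fin by (simp add: prod.Sigma split_def)
  have e2: "(\<Prod>p\<in>D. fst p) = 1"
  proof -
    have "(\<Prod>a\<in>S. \<Prod>b\<in>S-{a}. a) = (\<Prod>(a,b)\<in>D. a)" unfolding D_def
      by (rule prod.Sigma) (use fin in auto)
    then have "(\<Prod>p\<in>D. fst p) = (\<Prod>a\<in>S. \<Prod>b\<in>S-{a}. a)" by (simp add: split_def)
    also have "\<dots> = (\<Prod>a\<in>S. a ^ (card S - 1))" using fin
      by (intro prod.cong) (auto simp: card_Diff_singleton)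
    also have "\<dots> = (\<Prod>a\<in>S. a) ^ (card S - 1)" by (simp add: prod_power_distrib)
    finally show ?thesis using pr by simp
  qed
  define t where "t = (\<lambda>p::complex\<times>complex. 1 - snd p / fst p)"
  have e3: "(\<Prod>p\<in>D. fst p - snd p) = (\<Prod>p\<in>D. t p)"
  proof -
    have "(\<Prod>p\<in>D. t p) = (\<Prod>p\<in>D. (fst p - snd p) / fst p)"
      using nz by (intro prod.cong) (auto simp: t_def D_def diff_divide_distrib)
    also have "\<dots> = (\<Prod>p\<in>D. fst p - snd p) / (\<Prod>p\<in>D. fst p)" by (rule prod_dividef)
    finally show ?thesis using e2 by simp
  qed
  define \<tau> where "\<tau> = (\<lambda>p::complex\<times>complex. (\<sigma> (snd p), \<sigma> (fst p)))"
  have inv: "\<forall>p\<in>D. \<tau> p \<in> D \<and> \<tau> (\<tau> p) = p \<and> t (\<tau> p) = cnj (t p) \<and> t p \<noteq> 0"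
  proof
    fix p assume p: "p \<in> D"
    obtain a b where ab: "p = (a,b)" "a \<in> S" "b \<in> S" "a \<noteq> b" using p D_def by auto
    have a0: "a \<noteq> 0" "b \<noteq> 0" using nz ab by auto
    have "\<tau> p \<in> D" using ab cl \<sigma>inj unfolding \<tau>_def D_def \<sigma>_def by auto
    moreover have "\<tau> (\<tau> p) = p" using ab by (simp add: \<tau>_def \<sigma>\<sigma>)
    moreover have "t (\<tau> p) = cnj (t p)"
    proof -
      have "inverse (cnj a) / inverse (cnj b) = cnj b / cnj a"
        by (simp add: divide_inverse mult.commute)
      then show ?thesis unfolding ab \<tau>_def t_def \<sigma>_def by simp
    qed
    moreover have "t p \<noteq> 0"
    proof
      assume "t p = 0"
      then have "b / a = 1" unfolding t_def ab by simp
      then show False using ab a0 by simp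
    qed
    ultimately show "\<tau> p \<in> D \<and> \<tau> (\<tau> p) = p \<and> t (\<tau> p) = cnj (t p) \<and> t p \<noteq> 0" by blast
  qed
  obtain c where c: "c > 0" "prod t D = prod t {p\<in>D. \<tau> p = p} * complex_of_real c"
    using inv_prod[OF finD inv] by blast
  define U where "U = {a\<in>S. cmod a \<noteq> 1}"
  have Fix: "{p\<in>D. \<tau> p = p} = (\<lambda>a. (a, \<sigma> a)) ` U"
  proof
    show "{p\<in>D. \<tau> p = p} \<subseteq> (\<lambda>a. (a, \<sigma> a)) ` U"
    proof
      fix p assume p: "p \<in> {p\<in>D. \<tau> p = p}"
      obtain a b where ab: "p = (a,b)" "a \<in> S" "b \<in> S" "a \<noteq> b" using p D_def by auto
      have "\<sigma> a = b" using p ab by (simp add: \<tau>_def)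
      moreover have "cmod a \<noteq> 1" using sigma_fix[of a] nz ab calculation by (auto simp: \<sigma>_def)
      ultimately show "p \<in> (\<lambda>a. (a, \<sigma> a)) ` U" using ab U_def by auto
    qed
    show "(\<lambda>a. (a, \<sigma> a)) ` U \<subseteq> {p\<in>D. \<tau> p = p}"
    proof
      fix p assume "p \<in> (\<lambda>a. (a, \<sigma> a)) ` U"
      then obtain a where a: "p = (a, \<sigma> a)" "a \<in> S" "cmod a \<noteq> 1" unfolding U_def by auto
      have "\<sigma> a \<noteq> a" using sigma_fix[of a] nz a by (auto simp: \<sigma>_def)
      moreover have "\<sigma> a \<in> S" using cl a by (simp add: \<sigma>_def)
      ultimately show "p \<in> {p\<in>D. \<tau> p = p}" using a by (auto simp: D_def \<tau>_def \<sigma>\<sigma>)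
    qed
  qed
  define g where "g = (\<lambda>a::complex. 1 - 1 / cmod a ^ 2)"
  have tg: "t (a, \<sigma> a) = complex_of_real (g a)" if "a \<in> U" for a
  proof -
    have a0: "a \<noteq> 0" using that nz U_def by auto
    have "t (a, \<sigma> a) = 1 - 1 / (a * cnj a)" unfolding t_def \<sigma>_def using a0
      by (simp add: divide_inverse mult.commute)
    also have "a * cnj a = complex_of_real (cmod a ^ 2)" by (rule complex_norm_square[symmetric])
    finally show ?thesis unfolding g_def by simp
  qed
  have "prod t {p\<in>D. \<tau> p = p} = (\<Prod>a\<in>U. t (a, \<sigma> a))"
    unfolding Fix by (subst prod.reindex) (auto simp: inj_on_def)
  also have "\<dots> = (\<Prod>a\<in>U. complex_of_real (g a))" by (intro prod.cong) (auto simp: tg)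
  also have "\<dots> = complex_of_real (prod g U)" by simp
  finally have main: "(\<Prod>a\<in>S. \<Prod>b\<in>S-{a}. a - b) = complex_of_real (prod g U * c)"
    using e1 e3 c by simp
  have finU: "finite U" using fin U_def by auto
  have gnz: "\<forall>x\<in>U. g x \<noteq> 0"
  proof
    fix x assume x: "x \<in> U"
    then have "cmod x ^ 2 \<noteq> 1" unfolding U_def by (simp add: abs_square_eq_1)
    then have "1 / cmod x ^ 2 \<noteq> 1" by simp
    then show "g x \<noteq> 0" unfolding g_def by simp
  qed
  have neg: "{x\<in>U. g x < 0} = {x\<in>S. cmod x < 1}"
  proof -
    have "g x < 0 \<longleftrightarrow> cmod x < 1" if "x \<in> S" for x
    proof -
      have "cmod x > 0" using that nz by auto
      then have "cmod x ^ 2 > 0" by simp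
      then have "g x < 0 \<longleftrightarrow> cmod x ^ 2 < 1" unfolding g_def by (simp add: divide_less_eq)
      also have "\<dots> \<longleftrightarrow> cmod x < 1" by (simp add: power_less_one_iff abs_square_less_1)
      finally show ?thesis .
    qed
    then show ?thesis unfolding U_def by auto
  qed
  from real_prod_sign[OF finU gnz] neg c(1) show ?thesis using main
    by (intro exI[of _ "prod g U * c"]) (auto simp: zero_less_mult_iff)
qed



lemma lin_prod_nz: "(\<Prod>a\<leftarrow>as. [:-a,1::complex:]) \<noteq> 0"
proof (induction as)
  case Nil then show ?case by simp
next
  case (Cons a as)
  have "[:-a,1::complex:] \<noteq> 0" by simp
  with Cons.IH show ?case unfolding list.map prod_list.Cons by (metis mult_eq_0_iff)
qed

lemma proots_lin_list: "proots (\<Prod>a\<leftarrow>as. [:-a,1:]) = mset (as::complex list)"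
proof (induction as)
  case Nil then show ?case by simp
next
  case (Cons a as)
  have "proots (\<Prod>a\<leftarrow>a#as. [:-a,1:]) = proots [:-a,1:] + proots (\<Prod>a\<leftarrow>as. [:-a,1:])"
    unfolding list.map prod_list.Cons by (rule proots_mult[OF _ lin_prod_nz]) simp
  also have "proots [:-a,1::complex:] = {#a#}" using proots_linear_factor[of "-a"] by simp
  finally show ?case using Cons by simp
qed

lemma poly_lin_list: "poly (\<Prod>a\<leftarrow>as. [:-a,1:]) (x::complex) = (\<Prod>a\<leftarrow>as. x - a)"
  by (induction as) (auto simp: algebra_simps)

lemma prod_neg_list: "(\<Prod>a\<leftarrow>as. 0 - a) = (-1) ^ length as * prod_list (as::complex list)"
  by (induction as) auto

lemma distinct_count_le1: "distinct xs \<longleftrightarrow> (\<forall>a. count (mset xs) a \<le> 1)"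
proof (induction xs)
  case Nil then show ?case by simp
next
  case (Cons x xs)
  show ?case
  proof (cases "x \<in> set xs")
    case True
    then have "count (mset xs) x > 0" by simp
    then have "count (mset (x#xs)) x \<ge> 2" by simp
    then show ?thesis using True by force
  next
    case False
    then have c0: "count (mset xs) x = 0" by (simp add: count_mset_0_iff)
    have "(\<forall>a. count (mset (x#xs)) a \<le> 1) \<longleftrightarrow> (\<forall>a. count (mset xs) a \<le> 1)"
    proof
      assume h: "\<forall>a. count (mset (x#xs)) a \<le> 1"
      show "\<forall>a. count (mset xs) a \<le> 1"
      proof
        fix a show "count (mset xs) a \<le> 1"
        proof (cases "a = x")
          case True then show ?thesis by (simp only: True c0)
        next
          case False then show ?thesis using h[rule_format, of a] by simp
        qed
      qed
    next
      assume h: "\<forall>a. count (mset xs) a \<le> 1"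
      show "\<forall>a. count (mset (x#xs)) a \<le> 1"
      proof
        fix a show "count (mset (x#xs)) a \<le> 1" using h[rule_format, of a] c0 by (cases "a = x") auto
      qed
    qed
    then show ?thesis using Cons False by simp
  qed
qed

lemma size_filter_pairs:
  assumes "\<forall>j<k. P (u j) \<and> P (v j)"
  shows "size (filter_mset P (\<Sum>j<k. {#u j, v j#})) = 2 * k"
  using assms by (induction k) auto

lemma sum_pairs: "finite A \<Longrightarrow> (\<Sum>j\<in>A. {#u j, v j#}) = image_mset u (mset_set A) + image_mset v (mset_set A)"
  by (induction A rule: finite_induct) auto

lemma rcis_inv: assumes z: "(z::complex) \<noteq> 0"
  shows "complex_of_real (inverse (cmod z)) * cis (Arg z) = inverse (cnj z)"
proof -
  have e: "complex_of_real (cmod z) * cis (Arg z) = z" using rcis_cmod_Arg[of z] by (simp add: rcis_def)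
  have c0: "cmod z \<noteq> 0" using z by simp
  have "complex_of_real (inverse (cmod z)) * cis (Arg z) = (complex_of_real (cmod z) * cis (Arg z)) / complex_of_real (cmod z ^ 2)"
    using c0 by (simp add: power2_eq_square divide_inverse)
  also have "\<dots> = z / (z * cnj z)" unfolding e complex_norm_square ..
  also have "\<dots> = inverse (cnj z)" using z by (simp add: inverse_eq_divide)
  finally show ?thesis .
qed

lemma sigma_image:
  fixes S :: "complex set"
  assumes nz: "0 \<notin> S" and cl: "\<forall>x\<in>S. inverse (cnj x) \<in> S"
  shows "(\<lambda>x. inverse (cnj x)) ` {x\<in>S. cmod x < 1} = {x\<in>S. cmod x > 1}"
    and "(\<lambda>x. inverse (cnj x)) ` {x\<in>S. cmod x > 1} = {x\<in>S. cmod x < 1}"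
    and "inj_on (\<lambda>x::complex. inverse (cnj x)) X"
proof -
  define \<sigma> where "\<sigma> = (\<lambda>x::complex. inverse (cnj x))"
  define L where "L = {x\<in>S. cmod x < 1}"
  define G where "G = {x\<in>S. cmod x > 1}"
  have \<sigma>\<sigma>: "\<sigma> (\<sigma> x) = x" for x unfolding \<sigma>_def by (rule sigma_props(1))
  show inj: "inj_on (\<lambda>x::complex. inverse (cnj x)) X"
  proof (rule inj_onI)
    fix x y :: complex assume "inverse (cnj x) = inverse (cnj y)"
    then have "\<sigma> (\<sigma> x) = \<sigma> (\<sigma> y)" unfolding \<sigma>_def by simp
    then show "x = y" by (simp only: \<sigma>\<sigma>)
  qed
  have LG: "\<sigma> ` L \<subseteq> G"
  proof
    fix y assume "y \<in> \<sigma> ` L"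
    then obtain x where x: "y = \<sigma> x" "x \<in> S" "cmod x < 1" unfolding L_def by auto
    have "x \<noteq> 0" using x nz by auto
    then have "cmod x > 0" by simp
    then have "inverse (cmod x) > 1" using x(3) by (rule one_less_inverse)
    then show "y \<in> G" unfolding G_def using x cl by (simp add: \<sigma>_def sigma_props(2))
  qed
  have GL: "\<sigma> ` G \<subseteq> L"
  proof
    fix y assume "y \<in> \<sigma> ` G"
    then obtain x where x: "y = \<sigma> x" "x \<in> S" "cmod x > 1" unfolding G_def by auto
    then have "inverse (cmod x) < 1" by (simp add: inverse_less_1_iff)
    then show "y \<in> L" unfolding L_def using cl x by (simp add: \<sigma>_def sigma_props(2))
  qed
  have "G = \<sigma> ` \<sigma> ` G" by (simp add: image_image \<sigma>\<sigma>)
  also have "\<dots> \<subseteq> \<sigma> ` L" using GL by auto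
  finally have "\<sigma> ` L = G" using LG by auto
  moreover have "L = \<sigma> ` \<sigma> ` L" by (simp add: image_image \<sigma>\<sigma>)
  ultimately have "\<sigma> ` G = L" by simp
  show "(\<lambda>x. inverse (cnj x)) ` {x\<in>S. cmod x < 1} = {x\<in>S. cmod x > 1}"
    using \<open>\<sigma> ` L = G\<close> unfolding \<sigma>_def L_def G_def .
  show "(\<lambda>x. inverse (cnj x)) ` {x\<in>S. cmod x > 1} = {x\<in>S. cmod x < 1}"
    using \<open>\<sigma> ` G = L\<close> unfolding \<sigma>_def L_def G_def .
qed

lemma klox_construct:
  fixes S :: "complex set"
  assumes fin: "finite S" and nz: "0 \<notin> S" and cl: "\<forall>x\<in>S. inverse (cnj x) \<in> S"
  defines "l \<equiv> card {x\<in>S. cmod x < 1}"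
  shows "\<exists>(r :: nat \<Rightarrow> real) (\<theta> :: nat \<Rightarrow> real) (N :: complex multiset).
        (\<forall>j<l. r j > 0 \<and> r j \<noteq> 1) \<and> (\<forall>z\<in>#N. cmod z = 1) \<and>
        mset_set S =
          (\<Sum>j<l. {# complex_of_real (r j) * cis (\<theta> j),
                     complex_of_real (inverse (r j)) * cis (\<theta> j) #}) + N"
proof -
  define \<sigma> where "\<sigma> = (\<lambda>x::complex. inverse (cnj x))"
  define L where "L = {x\<in>S. cmod x < 1}"
  define G where "G = {x\<in>S. cmod x > 1}"
  define U1 where "U1 = {x\<in>S. cmod x = 1}"
  have LG: "\<sigma> ` L = G" "\<sigma> ` G = L" "inj_on \<sigma> L" "inj_on \<sigma> G"
    using sigma_image[OF nz cl] unfolding \<sigma>_def L_def G_def by auto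
  have finG: "finite G" "finite L" "finite U1" using fin unfolding G_def L_def U1_def by auto
  have cG: "card G = l" using card_image[OF LG(3)] LG(1) unfolding l_def L_def by simp
  obtain h where h: "bij_betw h {0..<card G} G" using ex_bij_betw_nat_finite[OF finG(1)] by blast
  then have h': "bij_betw h {..<l} G" using cG by (simp add: atLeast0LessThan)
  define r where "r = (\<lambda>j. cmod (h j))"
  define \<theta> where "\<theta> = (\<lambda>j. Arg (h j))"
  have hG: "h j \<in> G" if "j < l" for j using h' that by (auto simp: bij_betw_def)
  have r1: "\<forall>j<l. r j > 0 \<and> r j \<noteq> 1" using hG unfolding r_def G_def by fastforce
  have e1: "complex_of_real (r j) * cis (\<theta> j) = h j" for j
    using rcis_cmod_Arg[of "h j"] by (simp add: rcis_def r_def \<theta>_def)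
  have e2: "complex_of_real (inverse (r j)) * cis (\<theta> j) = \<sigma> (h j)" if "j < l" for j
  proof -
    have "h j \<noteq> 0" using hG[OF that] nz unfolding G_def by auto
    then show ?thesis unfolding r_def \<theta>_def \<sigma>_def by (rule rcis_inv)
  qed
  have "(\<Sum>j<l. {# complex_of_real (r j) * cis (\<theta> j), complex_of_real (inverse (r j)) * cis (\<theta> j) #})
      = (\<Sum>j<l. {# h j, \<sigma> (h j) #})"
  proof (rule sum.cong[OF refl])
    fix j assume "j \<in> {..<l}"
    then have j: "j < l" by simp
    show "{# complex_of_real (r j) * cis (\<theta> j), complex_of_real (inverse (r j)) * cis (\<theta> j) #}
      = {# h j, \<sigma> (h j) #}" by (simp only: e1 e2[OF j])
  qed
  also have "\<dots> = image_mset h (mset_set {..<l}) + image_mset (\<lambda>j. \<sigma> (h j)) (mset_set {..<l})"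
    by (rule sum_pairs) simp
  also have "image_mset h (mset_set {..<l}) = mset_set G"
    using image_mset_mset_set[of h "{..<l}"] h' by (auto simp: bij_betw_def)
  also have "image_mset (\<lambda>j. \<sigma> (h j)) (mset_set {..<l}) = image_mset \<sigma> (image_mset h (mset_set {..<l}))"
    by (simp add: image_mset.compositionality o_def)
  also have "image_mset h (mset_set {..<l}) = mset_set G"
    using image_mset_mset_set[of h "{..<l}"] h' by (auto simp: bij_betw_def)
  also have "image_mset \<sigma> (mset_set G) = mset_set L"
    using image_mset_mset_set[OF LG(4)] LG(2) by simp
  finally have sumeq: "(\<Sum>j<l. {# complex_of_real (r j) * cis (\<theta> j), complex_of_real (inverse (r j)) * cis (\<theta> j) #})
      = mset_set G + mset_set L" .
  have SU: "S = (G \<union> L) \<union> U1" unfolding G_def L_def U1_def by auto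
  have d1: "G \<inter> L = {}" "(G \<union> L) \<inter> U1 = {}" unfolding G_def L_def U1_def by auto
  have "mset_set S = mset_set (G \<union> L) + mset_set U1"
    unfolding SU by (rule mset_set_Union) (use finG d1 in auto)
  also have "mset_set (G \<union> L) = mset_set G + mset_set L"
    by (rule mset_set_Union) (use finG d1 in auto)
  finally have "mset_set S = mset_set G + mset_set L + mset_set U1" .
  then have "mset_set S = (\<Sum>j<l. {# complex_of_real (r j) * cis (\<theta> j), complex_of_real (inverse (r j)) * cis (\<theta> j) #}) + mset_set U1"
    using sumeq by simp
  moreover have "\<forall>z\<in>#mset_set U1. cmod z = 1" using finG unfolding U1_def by simp
  ultimately show ?thesis using r1 by blast
qed



lemma pair_norms:
  assumes "\<forall>j<k. r j > 0 \<and> r j \<noteq> (1::real)"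
  shows "\<forall>j<k. cmod (complex_of_real (r j) * cis (\<theta> j)) \<noteq> 1 \<and>
     cmod (complex_of_real (inverse (r j)) * cis (\<theta> j)) \<noteq> 1"
proof (intro allI impI)
  fix j assume "j < k"
  then have r: "r j > 0" "r j \<noteq> 1" using assms by auto
  have "cmod (complex_of_real (r j) * cis (\<theta> j)) = \<bar>r j\<bar>"
    by (simp only: norm_mult norm_of_real norm_cis mult_1_right)
  then have 1: "cmod (complex_of_real (r j) * cis (\<theta> j)) \<noteq> 1" using r by simp
  have "cmod (complex_of_real (inverse (r j)) * cis (\<theta> j)) = \<bar>inverse (r j)\<bar>"
    by (simp only: norm_mult norm_of_real norm_cis mult_1_right)
  moreover have "\<bar>inverse (r j)\<bar> \<noteq> 1" using r by simp
  ultimately have 2: "cmod (complex_of_real (inverse (r j)) * cis (\<theta> j)) \<noteq> 1" by simp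
  show "cmod (complex_of_real (r j) * cis (\<theta> j)) \<noteq> 1 \<and>
     cmod (complex_of_real (inverse (r j)) * cis (\<theta> j)) \<noteq> 1" using 1 2 by blast
qed

theorem theorem1p5:
  fixes A :: "complex mat" and n :: nat
  assumes "A \<in> SL n"
    and "c_reciprocal (char_poly A)"
  defines "R \<equiv> resultant (char_poly A) (pderiv (char_poly A))"
  shows "((\<exists>m::nat. regular_mat A \<and> k_loxodromic (2*m) A) \<longleftrightarrow> (R \<in> \<real> \<and> Re R > 0))
       \<and> ((\<exists>m::nat. regular_mat A \<and> k_loxodromic (2*m+1) A) \<longleftrightarrow> (R \<in> \<real> \<and> Re R < 0))
       \<and> (\<not> regular_mat A \<longleftrightarrow> R = 0)"
proof -
  from assms(1) have A: "A \<in> carrier_mat n n" and dA: "det A = 1" by (auto simp: SL_def)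
  define f where "f = char_poly A"
  obtain as where fas: "f = (\<Prod>a\<leftarrow>as. [:-a,1:])" and las: "length as = n"
    using char_poly_factorized[OF A] f_def by auto
  have f0: "f \<noteq> 0" using fas lin_prod_nz by simp
  have lc: "lead_coeff f = 1" using degree_monic_char_poly[OF A] f_def by simp
  have pr: "proots f = mset as" using fas proots_lin_list by simp
  have rootiff: "poly f z = 0 \<longleftrightarrow> z \<in> set as" for z
  proof -
    have "z \<in># proots f \<longleftrightarrow> poly f z = 0" using f0 by simp
    then show ?thesis using pr by simp
  qed
  have cm0: "char_matrix A 0 = A" by (rule eq_matI) (use A in \<open>auto simp: char_matrix_def\<close>)
  have mA: "- A = (-1) \<cdot>\<^sub>m A" by (rule eq_matI) (use A in auto)
  have "poly f 0 = det (- A)" using char_poly_matrix[OF A, of 0] cm0 f_def by simp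
  also have "\<dots> = (-1) ^ n" using mA A dA by simp
  finally have pf0: "poly f 0 = (-1) ^ n" .
  have "poly f 0 = (-1) ^ n * prod_list as" using fas poly_lin_list[of as 0] prod_neg_list[of as] las by simp
  with pf0 have prodas: "prod_list as = 1" by simp
  have RQ: "R = (\<Prod>a\<in>#mset as. poly (pderiv f) a)"
    unfolding R_def f_def[symmetric] resultant_Qr Qr_def lc pr by simp
  have regd: "regular_mat A \<longleftrightarrow> distinct as"
  proof -
    have "regular_mat A \<longleftrightarrow> (\<forall>a. order a f = 0 \<or> order a f = 1)"
      unfolding regular_mat_def rsquarefree_def f_def[symmetric] using f0 by simp
    also have "\<dots> \<longleftrightarrow> (\<forall>a. count (mset as) a \<le> 1)"
      using count_proots[OF f0] pr by (metis le_Suc_eq le_zero_eq One_nat_def)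
    also have "\<dots> \<longleftrightarrow> distinct as" by (rule distinct_count_le1[symmetric])
    finally show ?thesis .
  qed
  have iii: "\<not> regular_mat A \<longleftrightarrow> R = 0"
  proof -
    have "regular_mat A \<longleftrightarrow> (\<forall>a. \<not> (poly f a = 0 \<and> poly (pderiv f) a = 0))"
      unfolding regular_mat_def f_def[symmetric] by (rule rsquarefree_roots)
    moreover have "R = 0 \<longleftrightarrow> (\<exists>a\<in>set as. poly (pderiv f) a = 0)"
      unfolding RQ by auto
    ultimately show ?thesis using rootiff by blast
  qed
  define S where "S = set as"
  have finS: "finite S" unfolding S_def by simp
  have nzS: "0 \<notin> S"
    using assms(2) rootiff unfolding c_reciprocal_def f_def[symmetric] S_def by blast
  have clS: "\<forall>x\<in>S. inverse (cnj x) \<in> S"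
  proof
    fix x assume x: "x \<in> S"
    then have "poly f x = 0" using rootiff S_def by simp
    then have "order (inverse (cnj x)) f = order x f"
      using assms(2) unfolding c_reciprocal_def f_def[symmetric] by blast
    moreover have "order x f > 0" using x rootiff S_def f0 order_gt_0_iff by auto
    ultimately have "order (inverse (cnj x)) f > 0" by simp
    then have "poly f (inverse (cnj x)) = 0" using f0 order_gt_0_iff by blast
    then show "inverse (cnj x) \<in> S" using rootiff S_def by simp
  qed
  define l where "l = card {x\<in>S. cmod x < 1}"
  have cardU: "card {x\<in>S. cmod x \<noteq> 1} = 2 * l" unfolding l_def by (rule card_split[OF finS nzS clS])
  have regR: "\<exists>\<rho>::real. R = complex_of_real \<rho> \<and> \<rho> \<noteq> 0 \<and> (\<rho> > 0 \<longleftrightarrow> even l)"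
    if dist: "distinct as"
  proof -
    have prS: "(\<Prod>x\<in>S. x) = 1" using prodas prod.distinct_set_conv_list[OF dist, of "\<lambda>x. x"] S_def by simp
    have fS: "f = (\<Prod>b\<in>S. [:-b,1:])" using fas prod.distinct_set_conv_list[OF dist, of "\<lambda>b. [:-b,1:]"] S_def by simp
    have pd: "poly (pderiv f) a = (\<Prod>b\<in>S-{a}. a - b)" if a: "a \<in> S" for a
    proof -
      define Q where "Q = (\<Prod>b\<in>S-{a}. [:-b,1::complex:])"
      have fe: "f = [:-a,1:] * Q" unfolding fS Q_def by (rule prod.remove[OF finS a])
      have "pderiv f = [:-a,1:] * pderiv Q + Q * pderiv [:-a,1:]" unfolding fe by (rule pderiv_mult)
      then have "poly (pderiv f) a = poly [:-a,1:] a * poly (pderiv Q) a + poly Q a * poly (pderiv [:-a,1:]) a"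
        by (simp only: poly_add poly_mult)
      also have "poly [:-a,1:] a = 0" by simp
      also have "pderiv [:-a,1:] = 1" by (simp add: pderiv_pCons)
      finally have "poly (pderiv f) a = poly Q a" by simp
      also have "poly Q a = (\<Prod>b\<in>S-{a}. a - b)"
        unfolding Q_def poly_prod by (rule prod.cong) auto
      finally show ?thesis .
    qed
    have "R = (\<Prod>a\<leftarrow>as. poly (pderiv f) a)"
      by (simp only: RQ mset_map[symmetric] prod_mset_prod_list)
    also have "\<dots> = (\<Prod>a\<in>S. poly (pderiv f) a)" unfolding S_def by (rule prod.distinct_set_conv_list[OF dist, symmetric])
    also have "\<dots> = (\<Prod>a\<in>S. \<Prod>b\<in>S-{a}. a - b)" by (rule prod.cong) (auto simp: pd)
    finally show ?thesis using sign_main[OF finS nzS clS prS] l_def by auto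
  qed
  have klox_card: "k_loxodromic k A \<Longrightarrow> distinct as \<Longrightarrow> 2 * l = 2 * k" for k
  proof -
    assume kl: "k_loxodromic k A" and dist: "distinct as"
    obtain r \<theta> N where rk: "\<forall>j<k. r j > 0 \<and> r j \<noteq> 1" and N: "\<forall>z\<in>#N. cmod z = 1"
      and eq: "proots (char_poly A) = (\<Sum>j<k. {# complex_of_real (r j) * cis (\<theta> j),
                     complex_of_real (inverse (r j)) * cis (\<theta> j) #}) + N"
      using kl unfolding k_loxodromic_def by blast
    define P where "P = (\<lambda>z::complex. cmod z \<noteq> 1)"
    have "card {x\<in>S. cmod x \<noteq> 1} = size (filter_mset P (mset as))"
      unfolding P_def S_def using dist by (simp add: mset_set_set[symmetric])
    also have "mset as = proots (char_poly A)" using pr f_def by simp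
    also have "size (filter_mset P (proots (char_poly A))) = 2 * k"
    proof -
      have fN: "filter_mset P N = {#}" using N unfolding P_def by (simp add: filter_mset_eq_conv)
      have pairs: "\<forall>j<k. P (complex_of_real (r j) * cis (\<theta> j)) \<and> P (complex_of_real (inverse (r j)) * cis (\<theta> j))"
        unfolding P_def by (rule pair_norms[OF rk])
      have sz: "size (filter_mset P (\<Sum>j<k. {# complex_of_real (r j) * cis (\<theta> j),
                     complex_of_real (inverse (r j)) * cis (\<theta> j) #})) = 2 * k"
        by (rule size_filter_pairs[of k P "\<lambda>j. complex_of_real (r j) * cis (\<theta> j)"
              "\<lambda>j. complex_of_real (inverse (r j)) * cis (\<theta> j)", OF pairs])
      show ?thesis unfolding eq using fN sz by simp
    qed
    finally show "2 * l = 2 * k" using cardU by simp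
  qed
  have klox_l: "distinct as \<Longrightarrow> k_loxodromic l A"
  proof -
    assume dist: "distinct as"
    have eq: "mset_set S = proots (char_poly A)" using pr f_def dist S_def by (simp add: mset_set_set)
    obtain r \<theta> N where h1: "\<forall>j<card {x\<in>S. cmod x < 1}. r j > 0 \<and> r j \<noteq> 1"
      and h2: "\<forall>z\<in>#N. cmod z = 1"
      and h3: "mset_set S = (\<Sum>j<card {x\<in>S. cmod x < 1}. {# complex_of_real (r j) * cis (\<theta> j),
                     complex_of_real (inverse (r j)) * cis (\<theta> j) #}) + N"
      using klox_construct[OF finS nzS clS] by blast
    have h4: "proots (char_poly A) = (\<Sum>j<card {x\<in>S. cmod x < 1}. {# complex_of_real (r j) * cis (\<theta> j),
                     complex_of_real (inverse (r j)) * cis (\<theta> j) #}) + N"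
      using trans[OF eq[symmetric] h3] .
    show ?thesis unfolding k_loxodromic_def l_def using h1 h2 h4 by blast
  qed
  show ?thesis
  proof (intro conjI)
    show "(\<exists>m::nat. regular_mat A \<and> k_loxodromic (2*m) A) \<longleftrightarrow> (R \<in> \<real> \<and> Re R > 0)"
    proof
      assume "\<exists>m::nat. regular_mat A \<and> k_loxodromic (2*m) A"
      then obtain m where "regular_mat A" "k_loxodromic (2*m) A" by blast
      then have dist: "distinct as" and "l = 2 * m" using regd klox_card by auto
      then show "R \<in> \<real> \<and> Re R > 0" using regR by auto
    next
      assume h: "R \<in> \<real> \<and> Re R > 0"
      then have "R \<noteq> 0" by auto
      then have dist: "distinct as" using iii regd by auto
      then obtain \<rho> where "R = complex_of_real \<rho>" "\<rho> > 0 \<longleftrightarrow> even l" using regR by blast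
      then have "even l" using h by simp
      then obtain m where "l = 2 * m" by blast
      then show "\<exists>m::nat. regular_mat A \<and> k_loxodromic (2*m) A" using klox_l dist regd by auto
    qed
    show "(\<exists>m::nat. regular_mat A \<and> k_loxodromic (2*m+1) A) \<longleftrightarrow> (R \<in> \<real> \<and> Re R < 0)"
    proof
      assume "\<exists>m::nat. regular_mat A \<and> k_loxodromic (2*m+1) A"
      then obtain m where "regular_mat A" "k_loxodromic (2*m+1) A" by blast
      then have dist: "distinct as" and "l = 2 * m + 1" using regd klox_card by auto
      then show "R \<in> \<real> \<and> Re R < 0" using regR by fastforce
    next
      assume h: "R \<in> \<real> \<and> Re R < 0"
      then have "R \<noteq> 0" by auto
      then have dist: "distinct as" using iii regd by auto
      then obtain \<rho> where "R = complex_of_real \<rho>" "\<rho> \<noteq> 0" "\<rho> > 0 \<longleftrightarrow> even l" using regR by blast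
      then have "odd l" using h by simp
      then obtain m where "l = 2 * m + 1" by (metis oddE)
      then show "\<exists>m::nat. regular_mat A \<and> k_loxodromic (2*m+1) A" using klox_l dist regd by auto
    qed
    show "\<not> regular_mat A \<longleftrightarrow> R = 0" by (rule iii)
  qed
qed


end
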